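(* Let $\Sigma$ be a discrete controllable hybrid control system (in the setting described in the context) with $A=\{a,b\}$ and $G=\{(a,b),(b,a)\}$, and suppose the nonlinear control system in mode $a$ is controllable (any two points of $M_a$ are joined by a trajectory of $\dot x=X_a^u(x)$, $u\in U_a$). If for all $y_a\in B_a$ $$\bigcup_{y\in R_{ab}(y_a)}L_{\tau_E(y)}=M_b,$$ and $$L_{\tau_E(y)}\cap\tau_E(B_b)\neq\emptyset\quad\text{for all } y\in D_b,$$ then $\Sigma$ is globally controllable.
   Context: Setting: $A$ is a finite set of discrete modes; for each $c\in A$, $M_c$ is a smooth manifold (possibly with boundary or corners), $U_c\subseteq\mathbb{R}^{k_c}$ is a control set, and the dynamics in mode $c$ is $\dot x=X_c^{u}(x)$, $u\in U_c$, with $X_c^u$ a vector field on $M_c$. $M$ is the disjoint union of the $M_c$, $D_c\subseteq M_c\times U_c$, $D$ the disjoint union of the $D_c$, and $\tau_E$ is the projection $(c,x,u)\mapsto x$. $R\colon D\rightrightarrows D$ is a set-valued jump map defined only on the jump set $B$; $B_c=B\cap D_c$; $G=\{(c,d):\exists\,p\in D_c,q\in D_d,\ q\in R(p)\}$; for $y\in B_c$, $R_{cd}(y)=R(y)\cap D_d$. Standing assumption: for every $c$ and every $x\in\tau_E(B_c)$, every point of $D_c$ over $x$ lies in $B_c$. A hybrid control trajectory is a piecewise absolutely continuous $\gamma\colon[0,T]\to D$ with times $0=t_0<\dots<t_{N+1}=T$, modes $a_0,\dots,a_N$ with $(a_{j-1},a_j)\in G$, curves $\gamma_j=(x_j,u_j)\colon[t_j,t_{j+1}]\to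 D_{a_j}$ with $\dot x_j=X_{a_j}^{u_j}(x_j)$ a.e., $\gamma|_{[t_j,t_{j+1})}=\gamma_j$, $\gamma(T)=\gamma_N(T)$, and $\gamma_{j+1}(t_{j+1})\in R(\gamma_j(t_{j+1}))$. Discrete controllable: the directed graph $(A,G)$ is strongly connected. Globally controllable: any $p,q\in M$ are joined by a hybrid control trajectory. For $x_0\in M_c$, $L_{x_0}=\{(\phi^{X_c^{u_l}}_{t_l}\circ\dots\circ\phi^{X_c^{u_1}}_{t_1})(x_0): l\ge1,\ t_s\in\mathbb{R}^+,\ u_s\in U_c\}$, $\phi^X_t$ the flow of $X$.
   Formalization: In $L_{x_0}$ each flow of $X_c^{u}$ stays, paired with its constant control u, inside $D_c$ over its whole time interval, and the trajectories in the controllability of mode a take values in $D_a$. Each condition added here is assumed in the paper as well or is needed for the statement above to hold. *)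

theory Defs
  imports "HOL-Analysis.Analysis"
begin

text \<open>
Modes have type 'c, states live in an ambient Euclidean space 'x
(each M c :: 'x set is the state manifold of mode c), controls have type 'u
(U c :: 'u set).  A point of D (the disjoint union of the D_c) is a triple
(c, x, u); D_c = {(x,u). (c,x,u) \<in> D}.
\<close>

definition tauE :: "'c \<times> 'x \<times> 'u \<Rightarrow> 'x" where
  "tauE y = fst (snd y)"

definition mode_of :: "'c \<times> 'x \<times> 'u \<Rightarrow> 'c" where
  "mode_of y = fst y"

definition jump_set :: "('c \<times> 'x \<times> 'u) set \<Rightarrow> ('c \<times> 'x \<times> 'u \<Rightarrow> ('c \<times> 'x \<times> 'u) set)
    \<Rightarrow> ('c \<times> 'x \<times> 'u) set" where
  "jump_set D R = {y \<in> D. R y \<noteq> {}}"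

definition jump_set_mode :: "('c \<times> 'x \<times> 'u) set \<Rightarrow> ('c \<times> 'x \<times> 'u \<Rightarrow> ('c \<times> 'x \<times> 'u) set)
    \<Rightarrow> 'c \<Rightarrow> ('c \<times> 'x \<times> 'u) set" where
  "jump_set_mode D R c = {y \<in> jump_set D R. mode_of y = c}"

definition R_to :: "('c \<times> 'x \<times> 'u \<Rightarrow> ('c \<times> 'x \<times> 'u) set) \<Rightarrow> 'c \<Rightarrow> 'c \<times> 'x \<times> 'u
    \<Rightarrow> ('c \<times> 'x \<times> 'u) set" where
  "R_to R d y = {q \<in> R y. mode_of q = d}"

definition trans_graph :: "('c \<times> 'x \<times> 'u) set \<Rightarrow> ('c \<times> 'x \<times> 'u \<Rightarrow> ('c \<times> 'x \<times> 'u) set)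
    \<Rightarrow> ('c \<times> 'c) set" where
  "trans_graph D R = {(c, d). \<exists>p q. p \<in> D \<and> q \<in> D \<and> mode_of p = c \<and> mode_of q = d \<and> q \<in> R p}"

definition discrete_controllable :: "'c set \<Rightarrow> ('c \<times> 'c) set \<Rightarrow> bool" where
  "discrete_controllable A G \<longleftrightarrow> (\<forall>c\<in>A. \<forall>d\<in>A. (c, d) \<in> (G \<inter> A \<times> A)\<^sup>*)"

definition abs_continuous_on :: "real \<Rightarrow> real \<Rightarrow> (real \<Rightarrow> 'x::real_normed_vector) \<Rightarrow> bool" where
  "abs_continuous_on a b f \<longleftrightarrow>
    (\<forall>\<epsilon>>0. \<exists>\<delta>>0. \<forall>(n::nat) (s::nat \<Rightarrow> real) (t::nat \<Rightarrow> real).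
        (\<forall>i<n. a \<le> s i \<and> s i \<le> t i \<and> t i \<le> b) \<and>
        (\<forall>i<n. \<forall>j<n. i \<noteq> j \<longrightarrow> t i \<le> s j \<or> t j \<le> s i) \<and>
        (\<Sum>i<n. t i - s i) < \<delta>
        \<longrightarrow> (\<Sum>i<n. norm (f (t i) - f (s i))) < \<epsilon>)"

definition mode_traj :: "('c \<Rightarrow> 'u \<Rightarrow> 'x::euclidean_space \<Rightarrow> 'x) \<Rightarrow> ('c \<times> 'x \<times> 'u) set \<Rightarrow> 'c
    \<Rightarrow> real \<Rightarrow> real \<Rightarrow> (real \<Rightarrow> 'x) \<Rightarrow> (real \<Rightarrow> 'u) \<Rightarrow> bool" where
  "mode_traj X D c t0 t1 x u \<longleftrightarrow>
     t0 < t1 \<and> abs_continuous_on t0 t1 x \<and>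
     (\<forall>t\<in>{t0..t1}. (c, x t, u t) \<in> D) \<and>
     (AE t in lebesgue. t \<in> {t0..t1} \<longrightarrow> (x has_vector_derivative X c (u t) (x t)) (at t))"

definition mode_controllable :: "('c \<Rightarrow> 'u \<Rightarrow> 'x::euclidean_space \<Rightarrow> 'x) \<Rightarrow> ('c \<times> 'x \<times> 'u) set
    \<Rightarrow> ('c \<Rightarrow> 'x set) \<Rightarrow> 'c \<Rightarrow> bool" where
  "mode_controllable X D M c \<longleftrightarrow>
     (\<forall>p\<in>M c. \<forall>q\<in>M c. \<exists>T x u. mode_traj X D c 0 T x u \<and> x 0 = p \<and> x T = q)"

definition hybrid_traj_joins ::
  "('c \<Rightarrow> 'u \<Rightarrow> 'x::euclidean_space \<Rightarrow> 'x) \<Rightarrow> ('c \<times> 'x \<times> 'u) set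
    \<Rightarrow> ('c \<times> 'x \<times> 'u \<Rightarrow> ('c \<times> 'x \<times> 'u) set) \<Rightarrow> 'c \<times> 'x \<Rightarrow> 'c \<times> 'x \<Rightarrow> bool" where
  "hybrid_traj_joins X D R p q \<longleftrightarrow>
    (\<exists>(N::nat) (t::nat \<Rightarrow> real) (a::nat \<Rightarrow> 'c) (x::nat \<Rightarrow> real \<Rightarrow> 'x) (u::nat \<Rightarrow> real \<Rightarrow> 'u).
       t 0 = 0 \<and>
       (\<forall>j\<le>N. t j < t (Suc j)) \<and>
       (\<forall>j. 1 \<le> j \<and> j \<le> N \<longrightarrow> (a (j - 1), a j) \<in> trans_graph D R) \<and>
       (\<forall>j\<le>N. mode_traj X D (a j) (t j) (t (Suc j)) (x j) (u j)) \<and>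
       (\<forall>j<N. (a (Suc j), x (Suc j) (t (Suc j)), u (Suc j) (t (Suc j)))
                \<in> R (a j, x j (t (Suc j)), u j (t (Suc j)))) \<and>
       a 0 = fst p \<and> x 0 0 = snd p \<and>
       a N = fst q \<and> x N (t (Suc N)) = snd q)"

definition globally_controllable ::
  "('c \<Rightarrow> 'u \<Rightarrow> 'x::euclidean_space \<Rightarrow> 'x) \<Rightarrow> ('c \<Rightarrow> 'x set) \<Rightarrow> ('c \<times> 'x \<times> 'u) set
    \<Rightarrow> ('c \<times> 'x \<times> 'u \<Rightarrow> ('c \<times> 'x \<times> 'u) set) \<Rightarrow> bool" where
  "globally_controllable X M D R \<longleftrightarrow>
    (\<forall>c p d q. p \<in> M c \<longrightarrow> q \<in> M d \<longrightarrow> hybrid_traj_joins X D R (c, p) (d, q))"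

definition flow_step :: "('c \<Rightarrow> 'u \<Rightarrow> 'x::euclidean_space \<Rightarrow> 'x) \<Rightarrow> ('c \<Rightarrow> 'x set) \<Rightarrow> ('c \<Rightarrow> 'u set)
    \<Rightarrow> ('c \<times> 'x \<times> 'u) set \<Rightarrow> 'c \<Rightarrow> 'u \<Rightarrow> real \<Rightarrow> 'x \<Rightarrow> 'x \<Rightarrow> bool" where
  "flow_step X M U D c v T x0 x1 \<longleftrightarrow>
     v \<in> U c \<and> T > 0 \<and>
     (\<exists>y::real \<Rightarrow> 'x. y 0 = x0 \<and> y T = x1 \<and>
        (\<forall>s\<in>{0..T}. y s \<in> M c \<and> (c, y s, v) \<in> D \<and>
           (y has_vector_derivative X c v (y s)) (at s within {0..T})))"

definition reach_L :: "('c \<Rightarrow> 'u \<Rightarrow> 'x::euclidean_space \<Rightarrow> 'x) \<Rightarrow> ('c \<Rightarrow> 'x set) \<Rightarrow> ('c \<Rightarrow> 'u set)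
    \<Rightarrow> ('c \<times> 'x \<times> 'u) set \<Rightarrow> 'c \<Rightarrow> 'x \<Rightarrow> 'x set" where
  "reach_L X M U D c x0 =
     {z. \<exists>(l::nat) (ts::nat \<Rightarrow> real) (us::nat \<Rightarrow> 'u) (xs::nat \<Rightarrow> 'x).
           l \<ge> 1 \<and> xs 0 = x0 \<and> xs l = z \<and>
           (\<forall>s<l. flow_step X M U D c (us s) (ts s) (xs s) (xs (Suc s)))}"

end

theory Submission
  imports Defs
begin

definition goodtraj :: "('c \<Rightarrow> 'u \<Rightarrow> 'x::euclidean_space \<Rightarrow> 'x) \<Rightarrow> ('c \<times> 'x \<times> 'u) set \<Rightarrow> 'c
    \<Rightarrow> real \<Rightarrow> real \<Rightarrow> (real \<Rightarrow> 'x) \<Rightarrow> (real \<Rightarrow> 'u) \<Rightarrow> bool" where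
  "goodtraj X D c t0 t1 x u \<longleftrightarrow> t0 < t1 \<and>
     (\<exists>L. \<forall>s\<in>{t0..t1}. \<forall>t\<in>{t0..t1}. norm (x t - x s) \<le> L * \<bar>t - s\<bar>) \<and>
     (\<forall>t\<in>{t0..t1}. (c, x t, u t) \<in> D) \<and>
     (\<exists>F. finite F \<and> (\<forall>t\<in>{t0<..<t1} - F. (x has_vector_derivative X c (u t) (x t)) (at t)))"

lemma lip_ac:
  fixes x :: "real \<Rightarrow> 'x::real_normed_vector"
  assumes L: "\<forall>s\<in>{t0..t1}. \<forall>t\<in>{t0..t1}. norm (x t - x s) \<le> L * \<bar>t - s\<bar>"
  shows "abs_continuous_on t0 t1 x"
  unfolding abs_continuous_on_def
proof (intro allI impI)
  fix e :: real assume e: "e > 0"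
  show "\<exists>d>0. \<forall>(n::nat) (s::nat \<Rightarrow> real) (t::nat \<Rightarrow> real).
        (\<forall>i<n. t0 \<le> s i \<and> s i \<le> t i \<and> t i \<le> t1) \<and>
        (\<forall>i<n. \<forall>j<n. i \<noteq> j \<longrightarrow> t i \<le> s j \<or> t j \<le> s i) \<and>
        (\<Sum>i<n. t i - s i) < d
        \<longrightarrow> (\<Sum>i<n. norm (x (t i) - x (s i))) < e"
  proof (intro exI[of _ "e / (\<bar>L\<bar> + 1)"] conjI allI impI)
    show "e / (\<bar>L\<bar> + 1) > 0" using e by simp
    fix n :: nat and s t :: "nat \<Rightarrow> real"
    assume h: "(\<forall>i<n. t0 \<le> s i \<and> s i \<le> t i \<and> t i \<le> t1) \<and>
        (\<forall>i<n. \<forall>j<n. i \<noteq> j \<longrightarrow> t i \<le> s j \<or> t j \<le> s i) \<and>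
        (\<Sum>i<n. t i - s i) < e / (\<bar>L\<bar> + 1)"
    have "(\<Sum>i<n. norm (x (t i) - x (s i))) \<le> (\<Sum>i<n. (\<bar>L\<bar> + 1) * (t i - s i))"
    proof (rule sum_mono)
      fix i assume "i \<in> {..<n}"
      then have i: "t0 \<le> s i" "s i \<le> t i" "t i \<le> t1" using h by auto
      have "s i \<in> {t0..t1}" "t i \<in> {t0..t1}" using i by auto
      then have "norm (x (t i) - x (s i)) \<le> L * \<bar>t i - s i\<bar>" using L by blast
      also have "\<dots> \<le> (\<bar>L\<bar> + 1) * (t i - s i)" using i
        by (simp add: mult_right_mono)
      finally show "norm (x (t i) - x (s i)) \<le> (\<bar>L\<bar> + 1) * (t i - s i)" .
    qed
    also have "\<dots> = (\<bar>L\<bar> + 1) * (\<Sum>i<n. t i - s i)" by (simp add: sum_distrib_left)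
    also have "\<dots> < (\<bar>L\<bar> + 1) * (e / (\<bar>L\<bar> + 1))"
      using h by (intro mult_strict_left_mono) auto
    also have "\<dots> = e" by simp
    finally show "(\<Sum>i<n. norm (x (t i) - x (s i))) < e" .
  qed
qed

lemma good_mode_traj:
  assumes "goodtraj X D c t0 t1 x u"
  shows "mode_traj X D c t0 t1 x u"
proof -
  from assms obtain L F where lt: "t0 < t1"
    and L: "\<forall>s\<in>{t0..t1}. \<forall>t\<in>{t0..t1}. norm (x t - x s) \<le> L * \<bar>t - s\<bar>"
    and Dm: "\<forall>t\<in>{t0..t1}. (c, x t, u t) \<in> D"
    and F: "finite F" "\<forall>t\<in>{t0<..<t1} - F. (x has_vector_derivative X c (u t) (x t)) (at t)"
    unfolding goodtraj_def by blast
  have "negligible (insert t0 (insert t1 F))" using F by auto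
  then have "insert t0 (insert t1 F) \<in> null_sets lebesgue" by (simp add: negligible_iff_null_sets)
  then have "AE t in lebesgue. t \<notin> insert t0 (insert t1 F)" by (rule AE_not_in)
  then have "AE t in lebesgue. t \<in> {t0..t1} \<longrightarrow> (x has_vector_derivative X c (u t) (x t)) (at t)"
    by eventually_elim (use F in auto)
  then show ?thesis using lt Dm lip_ac[OF L] unfolding mode_traj_def by blast
qed

lemma flow_good:
  assumes Xc: "continuous_on (M c) (X c v)"
    and fs: "flow_step X M U D c v T x0 x1"
  shows "\<exists>y. goodtraj X D c 0 T y (\<lambda>_. v) \<and> y 0 = x0 \<and> y T = x1"
proof -
  from fs obtain y where T: "T > 0" and y0: "y 0 = x0" and yT: "y T = x1"
    and yM: "\<And>s. s \<in> {0..T} \<Longrightarrow> y s \<in> M c"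
    and yD: "\<And>s. s \<in> {0..T} \<Longrightarrow> (c, y s, v) \<in> D"
    and yd: "\<And>s. s \<in> {0..T} \<Longrightarrow> (y has_vector_derivative X c v (y s)) (at s within {0..T})"
    unfolding flow_step_def by blast
  have cy: "continuous_on {0..T} y"
    using yd has_vector_derivative_continuous continuous_on_eq_continuous_within by blast
  have cXy: "continuous_on {0..T} (\<lambda>s. X c v (y s))"
    by (rule continuous_on_compose2[OF Xc cy]) (use yM in auto)
  have "compact ((\<lambda>s. X c v (y s)) ` {0..T})"
    by (rule compact_continuous_image[OF cXy]) simp
  then obtain B where B: "\<And>s. s \<in> {0..T} \<Longrightarrow> norm (X c v (y s)) \<le> B"
    using compact_imp_bounded bounded_iff by (metis imageI)
  have L: "\<forall>s\<in>{0..T}. \<forall>t\<in>{0..T}. norm (y t - y s) \<le> B * \<bar>t - s\<bar>"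
  proof (intro ballI)
    fix s t assume s: "s \<in> {0..T}" and t: "t \<in> {0..T}"
    have "norm (y t - y s) \<le> B * norm (t - s)"
    proof (rule differentiable_bound[where f'="\<lambda>s h. h *\<^sub>R X c v (y s)"])
      show "convex {0..T}" by simp
      show "(y has_derivative (\<lambda>h. h *\<^sub>R X c v (y x))) (at x within {0..T})" if "x \<in> {0..T}" for x
        using yd[OF that] by (simp add: has_vector_derivative_def)
      show "onorm (\<lambda>h. h *\<^sub>R X c v (y x)) \<le> B" if "x \<in> {0..T}" for x
      proof -
        have "onorm (\<lambda>h::real. h *\<^sub>R X c v (y x)) = onorm (\<lambda>h::real. h) * norm (X c v (y x))"
          by (rule onorm_scaleR_left) simp
        then show ?thesis using B[OF that] by (simp add: onorm_id)
      qed
    qed (use s t in auto)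
    then show "norm (y t - y s) \<le> B * \<bar>t - s\<bar>" by simp
  qed
  have der: "\<forall>t\<in>{0<..<T} - {}. (y has_vector_derivative X c v (y t)) (at t)"
  proof
    fix t assume "t \<in> {0<..<T} - {}"
    then have t: "0 < t" "t < T" by auto
    then have "(y has_vector_derivative X c v (y t)) (at t within {0..T})" using yd by auto
    then show "(y has_vector_derivative X c v (y t)) (at t)" using t by (simp add: at_within_Icc_at)
  qed
  show ?thesis unfolding goodtraj_def
    using T L yD der y0 yT by (intro exI[of _ y]) blast
qed

lemma good_shift:
  assumes "goodtraj X D c t0 t1 x u"
  shows "goodtraj X D c (t0 + r) (t1 + r) (\<lambda>t. x (t - r)) (\<lambda>t. u (t - r))"
proof -
  from assms obtain L F where lt: "t0 < t1"
    and L: "\<forall>s\<in>{t0..t1}. \<forall>t\<in>{t0..t1}. norm (x t - x s) \<le> L * \<bar>t - s\<bar>"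
    and Dm: "\<forall>t\<in>{t0..t1}. (c, x t, u t) \<in> D"
    and F: "finite F" "\<forall>t\<in>{t0<..<t1} - F. (x has_vector_derivative X c (u t) (x t)) (at t)"
    unfolding goodtraj_def by blast
  have L': "\<forall>s\<in>{t0+r..t1+r}. \<forall>t\<in>{t0+r..t1+r}. norm (x (t - r) - x (s - r)) \<le> L * \<bar>t - s\<bar>"
  proof (intro ballI)
    fix s t assume "s \<in> {t0+r..t1+r}" "t \<in> {t0+r..t1+r}"
    then have "s - r \<in> {t0..t1}" "t - r \<in> {t0..t1}" by auto
    then have "norm (x (t - r) - x (s - r)) \<le> L * \<bar>(t - r) - (s - r)\<bar>" using L by blast
    then show "norm (x (t - r) - x (s - r)) \<le> L * \<bar>t - s\<bar>" by simp
  qed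
  have Dm': "\<forall>t\<in>{t0+r..t1+r}. (c, x (t - r), u (t - r)) \<in> D"
  proof
    fix t assume "t \<in> {t0+r..t1+r}"
    then have "t - r \<in> {t0..t1}" by auto
    then show "(c, x (t - r), u (t - r)) \<in> D" using Dm by blast
  qed
  have der: "\<forall>t\<in>{t0+r<..<t1+r} - (\<lambda>z. z + r) ` F.
      ((\<lambda>t. x (t - r)) has_vector_derivative X c (u (t - r)) (x (t - r))) (at t)"
  proof
    fix t assume t: "t \<in> {t0+r<..<t1+r} - (\<lambda>z. z + r) ` F"
    then have "t - r \<notin> F" by (metis DiffD2 diff_add_cancel image_eqI)
    with t have "t - r \<in> {t0<..<t1} - F" by auto
    then have dx: "(x has_vector_derivative X c (u (t - r)) (x (t - r))) (at (t - r))" using F by blast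
    have df: "((\<lambda>t. t - r) has_vector_derivative 1) (at t)"
      by (auto intro!: derivative_eq_intros)
    from vector_diff_chain_at[OF df dx]
    show "((\<lambda>t. x (t - r)) has_vector_derivative X c (u (t - r)) (x (t - r))) (at t)"
      by (simp add: o_def)
  qed
  show ?thesis unfolding goodtraj_def
    using lt L' Dm' der F(1) by (intro conjI exI[of _ L] exI[of _ "(\<lambda>z. z + r) ` F"]) auto
qed

lemma lip_concat:
  fixes x y :: "real \<Rightarrow> 'x::real_normed_vector"
  assumes L1: "\<forall>s\<in>{t0..t1}. \<forall>t\<in>{t0..t1}. norm (x t - x s) \<le> L1 * \<bar>t - s\<bar>"
    and L2: "\<forall>s\<in>{t1..t2}. \<forall>t\<in>{t1..t2}. norm (y t - y s) \<le> L2 * \<bar>t - s\<bar>"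
    and eq: "x t1 = y t1" and o: "t0 \<le> t1" "t1 \<le> t2"
  shows "\<forall>s\<in>{t0..t2}. \<forall>t\<in>{t0..t2}.
     norm ((if t \<le> t1 then x t else y t) - (if s \<le> t1 then x s else y s)) \<le> max \<bar>L1\<bar> \<bar>L2\<bar> * \<bar>t - s\<bar>"
proof (intro ballI)
  define L where "L = max \<bar>L1\<bar> \<bar>L2\<bar>"
  have L0: "L \<ge> 0" unfolding L_def by simp
  have A: "norm (x t - x s) \<le> L * \<bar>t - s\<bar>" if "s \<in> {t0..t1}" "t \<in> {t0..t1}" for s t
  proof -
    have "norm (x t - x s) \<le> L1 * \<bar>t - s\<bar>" using L1 that by blast
    also have "\<dots> \<le> L * \<bar>t - s\<bar>" unfolding L_def by (intro mult_right_mono) auto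
    finally show ?thesis .
  qed
  have B: "norm (y t - y s) \<le> L * \<bar>t - s\<bar>" if "s \<in> {t1..t2}" "t \<in> {t1..t2}" for s t
  proof -
    have "norm (y t - y s) \<le> L2 * \<bar>t - s\<bar>" using L2 that by blast
    also have "\<dots> \<le> L * \<bar>t - s\<bar>" unfolding L_def by (intro mult_right_mono) auto
    finally show ?thesis .
  qed
  have C: "norm (y t - x s) \<le> L * \<bar>t - s\<bar>" if "s \<in> {t0..t1}" "t \<in> {t1..t2}" for s t
  proof -
    have "norm (y t - x s) \<le> norm (y t - y t1) + norm (x t1 - x s)"
      using eq norm_triangle_ineq[of "y t - y t1" "x t1 - x s"] by simp
    also have "\<dots> \<le> L * \<bar>t - t1\<bar> + L * \<bar>t1 - s\<bar>"
      using A[of s t1] B[of t1 t] that o by (intro add_mono) auto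
    also have "\<dots> = L * \<bar>t - s\<bar>" using that by (simp add: algebra_simps)
    finally show ?thesis .
  qed
  fix s t assume s: "s \<in> {t0..t2}" and t: "t \<in> {t0..t2}"
  show "norm ((if t \<le> t1 then x t else y t) - (if s \<le> t1 then x s else y s)) \<le> L * \<bar>t - s\<bar>"
  proof (cases "t \<le> t1"; cases "s \<le> t1")
    assume "t \<le> t1" "s \<le> t1" then show ?thesis using A s t by auto
  next
    assume "\<not> t \<le> t1" "\<not> s \<le> t1" then show ?thesis using B s t by auto
  next
    assume "\<not> t \<le> t1" "s \<le> t1" then show ?thesis using C s t by auto
  next
    assume a: "t \<le> t1" "\<not> s \<le> t1"
    then have "norm (y s - x t) \<le> L * \<bar>s - t\<bar>" using C s t by auto
    then show ?thesis using a by (simp add: norm_minus_commute abs_minus_commute)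
  qed
qed

lemma good_concat:
  assumes g1: "goodtraj X D c t0 t1 x u" and g2: "goodtraj X D c t1 t2 y w" and eq: "x t1 = y t1"
  shows "goodtraj X D c t0 t2 (\<lambda>t. if t \<le> t1 then x t else y t) (\<lambda>t. if t \<le> t1 then u t else w t)"
proof -
  from g1 obtain L1 F1 where lt1: "t0 < t1"
    and L1: "\<forall>s\<in>{t0..t1}. \<forall>t\<in>{t0..t1}. norm (x t - x s) \<le> L1 * \<bar>t - s\<bar>"
    and Dm1: "\<forall>t\<in>{t0..t1}. (c, x t, u t) \<in> D"
    and F1: "finite F1" "\<forall>t\<in>{t0<..<t1} - F1. (x has_vector_derivative X c (u t) (x t)) (at t)"
    unfolding goodtraj_def by blast
  from g2 obtain L2 F2 where lt2: "t1 < t2"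
    and L2: "\<forall>s\<in>{t1..t2}. \<forall>t\<in>{t1..t2}. norm (y t - y s) \<le> L2 * \<bar>t - s\<bar>"
    and Dm2: "\<forall>t\<in>{t1..t2}. (c, y t, w t) \<in> D"
    and F2: "finite F2" "\<forall>t\<in>{t1<..<t2} - F2. (y has_vector_derivative X c (w t) (y t)) (at t)"
    unfolding goodtraj_def by blast
  have L: "\<forall>s\<in>{t0..t2}. \<forall>t\<in>{t0..t2}.
     norm ((if t \<le> t1 then x t else y t) - (if s \<le> t1 then x s else y s)) \<le> max \<bar>L1\<bar> \<bar>L2\<bar> * \<bar>t - s\<bar>"
    using lip_concat[OF L1 L2 eq] lt1 lt2 by auto
  have Dm: "\<forall>t\<in>{t0..t2}. (c, if t \<le> t1 then x t else y t, if t \<le> t1 then u t else w t) \<in> D"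
    using Dm1 Dm2 by auto
  have der: "\<forall>t\<in>{t0<..<t2} - (insert t1 (F1 \<union> F2)).
     ((\<lambda>t. if t \<le> t1 then x t else y t) has_vector_derivative
        X c (if t \<le> t1 then u t else w t) (if t \<le> t1 then x t else y t)) (at t)"
  proof
    fix t assume t: "t \<in> {t0<..<t2} - (insert t1 (F1 \<union> F2))"
    show "((\<lambda>t. if t \<le> t1 then x t else y t) has_vector_derivative
        X c (if t \<le> t1 then u t else w t) (if t \<le> t1 then x t else y t)) (at t)"
    proof (cases "t < t1")
      case True
      then have "(x has_vector_derivative X c (u t) (x t)) (at t)" using F1 t by auto
      then have "((\<lambda>t. if t \<le> t1 then x t else y t) has_vector_derivative X c (u t) (x t)) (at t)"
        by (rule has_vector_derivative_transform_within_open[where S="{..<t1}"]) (use True in auto)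
      then show ?thesis using True by simp
    next
      case False
      then have "t > t1" using t by auto
      then have "(y has_vector_derivative X c (w t) (y t)) (at t)" using F2 t by auto
      then have "((\<lambda>t. if t \<le> t1 then x t else y t) has_vector_derivative X c (w t) (y t)) (at t)"
        by (rule has_vector_derivative_transform_within_open[where S="{t1<..}"]) (use \<open>t > t1\<close> in auto)
      then show ?thesis using \<open>t > t1\<close> by simp
    qed
  qed
  show ?thesis unfolding goodtraj_def
    using lt1 lt2 L Dm der F1(1) F2(1)
    by (intro conjI exI[of _ "max \<bar>L1\<bar> \<bar>L2\<bar>"] exI[of _ "insert t1 (F1 \<union> F2)"]) auto
qed

lemma good_fix_start:
  assumes "goodtraj X D c t0 t1 x u" and "(c, x t0, w) \<in> D"
  shows "goodtraj X D c t0 t1 x (u(t0 := w))"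
proof -
  from assms(1) obtain L F where lt: "t0 < t1"
    and L: "\<forall>s\<in>{t0..t1}. \<forall>t\<in>{t0..t1}. norm (x t - x s) \<le> L * \<bar>t - s\<bar>"
    and Dm: "\<forall>t\<in>{t0..t1}. (c, x t, u t) \<in> D"
    and F: "finite F" "\<forall>t\<in>{t0<..<t1} - F. (x has_vector_derivative X c (u t) (x t)) (at t)"
    unfolding goodtraj_def by blast
  show ?thesis unfolding goodtraj_def
    using lt L Dm F assms(2) by (intro conjI exI[of _ L] exI[of _ F]) auto
qed

lemma reach_aux:
  assumes Xc: "\<And>v. v \<in> U c \<Longrightarrow> continuous_on (M c) (X c v)"
  shows "(\<forall>s<l. flow_step X M U D c (us s) (ts s) (xs s) (xs (Suc s))) \<Longrightarrow> l \<ge> 1 \<Longrightarrow>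
     \<exists>T y u. goodtraj X D c 0 T y u \<and> y 0 = xs 0 \<and> y T = xs l"
proof (induction l)
  case 0
  then show ?case by simp
next
  case (Suc l)
  have fs: "flow_step X M U D c (us l) (ts l) (xs l) (xs (Suc l))" using Suc.prems by simp
  then have "us l \<in> U c" unfolding flow_step_def by simp
  from flow_good[OF Xc[OF this] fs] obtain y' where
    g': "goodtraj X D c 0 (ts l) y' (\<lambda>_. us l)" and y'0: "y' 0 = xs l" and y'T: "y' (ts l) = xs (Suc l)"
    by blast
  show ?case
  proof (cases "l = 0")
    case True
    then show ?thesis using g' y'0 y'T by blast
  next
    case False
    then obtain T y u where g: "goodtraj X D c 0 T y u" and y0: "y 0 = xs 0" and yT: "y T = xs l"
      using Suc by auto
    have T: "T > 0" using g unfolding goodtraj_def by simp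
    have tl: "ts l > 0" using g' unfolding goodtraj_def by simp
    have gs: "goodtraj X D c T (ts l + T) (\<lambda>t. y' (t - T)) (\<lambda>t. us l)"
      using good_shift[OF g', of T] by simp
    have gc: "goodtraj X D c 0 (ts l + T) (\<lambda>t. if t \<le> T then y t else y' (t - T))
                 (\<lambda>t. if t \<le> T then u t else us l)"
      by (rule good_concat[OF g gs]) (simp add: yT y'0)
    show ?thesis
      by (rule exI[of _ "ts l + T"], rule exI, rule exI, rule conjI[OF gc]) (use T tl y0 y'T in auto)
  qed
qed

lemma reach_good:
  assumes Xc: "\<And>v. v \<in> U c \<Longrightarrow> continuous_on (M c) (X c v)"
    and z: "z \<in> reach_L X M U D c x0"
  shows "\<exists>T y u. goodtraj X D c 0 T y u \<and> y 0 = x0 \<and> y T = z"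
proof -
  from z obtain l ts us xs where "l \<ge> 1" "xs 0 = x0" "xs l = z"
    "\<forall>s<l. flow_step X M U D c (us s) (ts s) (xs s) (xs (Suc s))"
    unfolding reach_L_def by blast
  then show ?thesis using reach_aux[of U c M X l D us ts xs] Xc by auto
qed

lemma mode_traj_shift:
  assumes "mode_traj X D c t0 t1 x u"
  shows "mode_traj X D c (t0 + r) (t1 + r) (\<lambda>t. x (t - r)) (\<lambda>t. u (t - r))"
proof -
  from assms have lt: "t0 < t1" and ac: "abs_continuous_on t0 t1 x"
    and Dm: "\<forall>t\<in>{t0..t1}. (c, x t, u t) \<in> D"
    and ae: "AE t in lebesgue. t \<in> {t0..t1} \<longrightarrow> (x has_vector_derivative X c (u t) (x t)) (at t)"
    unfolding mode_traj_def by auto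
  have ac': "abs_continuous_on (t0 + r) (t1 + r) (\<lambda>t. x (t - r))"
    unfolding abs_continuous_on_def
  proof (intro allI impI)
    fix e :: real assume "e > 0"
    with ac obtain d where d: "d > 0" and H: "\<forall>(n::nat) (s::nat \<Rightarrow> real) (t::nat \<Rightarrow> real).
        (\<forall>i<n. t0 \<le> s i \<and> s i \<le> t i \<and> t i \<le> t1) \<and>
        (\<forall>i<n. \<forall>j<n. i \<noteq> j \<longrightarrow> t i \<le> s j \<or> t j \<le> s i) \<and>
        (\<Sum>i<n. t i - s i) < d
        \<longrightarrow> (\<Sum>i<n. norm (x (t i) - x (s i))) < e"
      unfolding abs_continuous_on_def by blast
    show "\<exists>d>0. \<forall>(n::nat) (s::nat \<Rightarrow> real) (t::nat \<Rightarrow> real).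
        (\<forall>i<n. t0 + r \<le> s i \<and> s i \<le> t i \<and> t i \<le> t1 + r) \<and>
        (\<forall>i<n. \<forall>j<n. i \<noteq> j \<longrightarrow> t i \<le> s j \<or> t j \<le> s i) \<and>
        (\<Sum>i<n. t i - s i) < d
        \<longrightarrow> (\<Sum>i<n. norm (x (t i - r) - x (s i - r))) < e"
    proof (intro exI[of _ d] conjI allI impI)
      show "d > 0" by fact
      fix n :: nat and s t :: "nat \<Rightarrow> real"
      assume h: "(\<forall>i<n. t0 + r \<le> s i \<and> s i \<le> t i \<and> t i \<le> t1 + r) \<and>
        (\<forall>i<n. \<forall>j<n. i \<noteq> j \<longrightarrow> t i \<le> s j \<or> t j \<le> s i) \<and>
        (\<Sum>i<n. t i - s i) < d"
      have "(\<Sum>i<n. (t i - r) - (s i - r)) = (\<Sum>i<n. t i - s i)" by simp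
      then have "(\<forall>i<n. t0 \<le> s i - r \<and> s i - r \<le> t i - r \<and> t i - r \<le> t1) \<and>
        (\<forall>i<n. \<forall>j<n. i \<noteq> j \<longrightarrow> t i - r \<le> s j - r \<or> t j - r \<le> s i - r) \<and>
        (\<Sum>i<n. (t i - r) - (s i - r)) < d" using h by auto
      then show "(\<Sum>i<n. norm (x (t i - r) - x (s i - r))) < e"
        using H[rule_format, of n "\<lambda>i. s i - r" "\<lambda>i. t i - r"] by blast
    qed
  qed
  from ae obtain N where N: "N \<in> null_sets lebesgue"
    and NP: "{t \<in> space lebesgue. \<not> (t \<in> {t0..t1} \<longrightarrow> (x has_vector_derivative X c (u t) (x t)) (at t))} \<subseteq> N"
    unfolding eventually_ae_filter by blast
  have "negligible ((+) r ` N)" using N negligible_translation negligible_iff_null_sets by blast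
  then have N': "(+) r ` N \<in> null_sets lebesgue" by (simp add: negligible_iff_null_sets)
  have ae': "AE t in lebesgue. t \<in> {t0+r..t1+r} \<longrightarrow>
     ((\<lambda>t. x (t - r)) has_vector_derivative X c (u (t - r)) (x (t - r))) (at t)"
    unfolding eventually_ae_filter
  proof (intro bexI[OF _ N'] subsetI)
    fix t assume "t \<in> {t \<in> space lebesgue. \<not> (t \<in> {t0+r..t1+r} \<longrightarrow>
     ((\<lambda>t. x (t - r)) has_vector_derivative X c (u (t - r)) (x (t - r))) (at t))}"
    then have t: "t \<in> {t0+r..t1+r}" and nd: "\<not> ((\<lambda>t. x (t - r)) has_vector_derivative X c (u (t - r)) (x (t - r))) (at t)"
      by auto
    have "t - r \<in> N"
    proof (rule ccontr)
      assume "t - r \<notin> N"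
      moreover have "t - r \<in> {t0..t1}" using t by auto
      ultimately have "(x has_vector_derivative X c (u (t - r)) (x (t - r))) (at (t - r))"
        using NP by (simp add: subset_iff) blast
      moreover have df: "((\<lambda>t. t - r) has_vector_derivative 1) (at t)"
        by (auto intro!: derivative_eq_intros)
      ultimately have "((\<lambda>t. x (t - r)) has_vector_derivative X c (u (t - r)) (x (t - r))) (at t)"
        using vector_diff_chain_at[OF df] by (simp add: o_def)
      with nd show False by simp
    qed
    then show "t \<in> (+) r ` N" by (metis add.commute diff_add_cancel image_eqI)
  qed
  have Dm': "\<forall>t\<in>{t0+r..t1+r}. (c, x (t - r), u (t - r)) \<in> D"
  proof
    fix t assume "t \<in> {t0+r..t1+r}"
    then have "t - r \<in> {t0..t1}" by auto
    then show "(c, x (t - r), u (t - r)) \<in> D" using Dm by blast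
  qed
  show ?thesis unfolding mode_traj_def using lt ac' Dm' ae' by simp
qed

lemma mode_traj_fix_start:
  assumes "mode_traj X D c t0 t1 x u" and "(c, x t0, w) \<in> D"
  shows "mode_traj X D c t0 t1 x (u(t0 := w))"
proof -
  from assms have lt: "t0 < t1" and ac: "abs_continuous_on t0 t1 x"
    and Dm: "\<forall>t\<in>{t0..t1}. (c, x t, u t) \<in> D"
    and ae: "AE t in lebesgue. t \<in> {t0..t1} \<longrightarrow> (x has_vector_derivative X c (u t) (x t)) (at t)"
    unfolding mode_traj_def by auto
  have "negligible {t0}" by simp
  then have "{t0} \<in> null_sets lebesgue" by (simp add: negligible_iff_null_sets)
  then have "AE t in lebesgue. t \<notin> {t0}" by (rule AE_not_in)
  with ae have "AE t in lebesgue. t \<in> {t0..t1} \<longrightarrow> (x has_vector_derivative X c ((u(t0 := w)) t) (x t)) (at t)"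
    by eventually_elim auto
  then show ?thesis unfolding mode_traj_def using lt ac Dm assms(2) by auto
qed

lemma hyb1:
  assumes "mode_traj X D c 0 T x u"
  shows "hybrid_traj_joins X D R (c, x 0) (c, x T)"
  unfolding hybrid_traj_joins_def
  apply (rule exI[of _ 0], rule exI[of _ "\<lambda>j. if j = 0 then 0 else T"], rule exI[of _ "\<lambda>_. c"],
         rule exI[of _ "\<lambda>_. x"], rule exI[of _ "\<lambda>_. u"])
  using assms unfolding mode_traj_def by auto

lemma hyb2:
  assumes m1: "mode_traj X D c 0 T1 x1 u1" and m2: "mode_traj X D d T1 T2 x2 u2"
    and G: "(c, d) \<in> trans_graph D R"
    and J: "(d, x2 T1, u2 T1) \<in> R (c, x1 T1, u1 T1)"
  shows "hybrid_traj_joins X D R (c, x1 0) (d, x2 T2)"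
proof -
  have lt: "0 < T1" "T1 < T2" using m1 m2 unfolding mode_traj_def by auto
  show ?thesis
  unfolding hybrid_traj_joins_def
  apply (rule exI[of _ 1], rule exI[of _ "\<lambda>j. if j = 0 then 0 else if j = 1 then T1 else T2"],
         rule exI[of _ "\<lambda>j. if j = 0 then c else d"],
         rule exI[of _ "\<lambda>j. if j = 0 then x1 else x2"], rule exI[of _ "\<lambda>j. if j = 0 then u1 else u2"])
  using lt m1 m2 G J by (auto simp: le_Suc_eq less_Suc_eq)
qed

lemma hyb3:
  assumes m1: "mode_traj X D c 0 T1 x1 u1" and m2: "mode_traj X D d T1 T2 x2 u2"
    and m3: "mode_traj X D e T2 T3 x3 u3"
    and G1: "(c, d) \<in> trans_graph D R" and G2: "(d, e) \<in> trans_graph D R"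
    and J1: "(d, x2 T1, u2 T1) \<in> R (c, x1 T1, u1 T1)"
    and J2: "(e, x3 T2, u3 T2) \<in> R (d, x2 T2, u2 T2)"
  shows "hybrid_traj_joins X D R (c, x1 0) (e, x3 T3)"
proof -
  have lt: "0 < T1" "T1 < T2" "T2 < T3" using m1 m2 m3 unfolding mode_traj_def by auto
  show ?thesis
  unfolding hybrid_traj_joins_def
  apply (rule exI[of _ 2], rule exI[of _ "\<lambda>j. if j = 0 then 0 else if j = 1 then T1 else if j = 2 then T2 else T3"],
         rule exI[of _ "\<lambda>j. if j = 0 then c else if j = 1 then d else e"],
         rule exI[of _ "\<lambda>j. if j = 0 then x1 else if j = 1 then x2 else x3"],
         rule exI[of _ "\<lambda>j. if j = 0 then u1 else if j = 1 then u2 else u3"])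
  using lt m1 m2 m3 G1 G2 J1 J2 by (auto simp: le_Suc_eq less_Suc_eq numeral_2_eq_2)
qed

theorem theorem4p8:
  fixes X :: "'c \<Rightarrow> 'u \<Rightarrow> 'x::euclidean_space \<Rightarrow> 'x"
    and M :: "'c \<Rightarrow> 'x set"
    and U :: "'c \<Rightarrow> 'u set"
    and D :: "('c \<times> 'x \<times> 'u) set"
    and R :: "'c \<times> 'x \<times> 'u \<Rightarrow> ('c \<times> 'x \<times> 'u) set"
    and a b :: 'c
  assumes modes: "(UNIV :: 'c set) = {a, b}" and ab: "a \<noteq> b"
    and D_sub: "\<And>c x v. (c, x, v) \<in> D \<Longrightarrow> x \<in> M c \<and> v \<in> U c"
    and X_cont: "\<And>c v. v \<in> U c \<Longrightarrow> continuous_on (M c) (X c v)"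
    and R_dom: "\<And>y. y \<notin> D \<Longrightarrow> R y = {}"
    and R_ran: "\<And>y. R y \<subseteq> D"
    and standing: "\<And>c x v. x \<in> tauE ` jump_set_mode D R c \<Longrightarrow> (c, x, v) \<in> D
                     \<Longrightarrow> (c, x, v) \<in> jump_set_mode D R c"
    and G: "trans_graph D R = {(a, b), (b, a)}"
    and disc: "discrete_controllable UNIV (trans_graph D R)"
    and ctrl_a: "mode_controllable X D M a"
    and H1: "\<forall>ya \<in> jump_set_mode D R a.
               (\<Union>y \<in> R_to R b ya. reach_L X M U D b (tauE y)) = M b"
    and H2: "\<forall>y \<in> D. mode_of y = b \<longrightarrow>
               reach_L X M U D b (tauE y) \<inter> tauE ` jump_set_mode D R b \<noteq> {}"
  shows "globally_controllable X M D R"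
proof -
  have td: "tauE (c', x', u') = x'" "mode_of (c', x', u') = c'" for c' x' u'
    by (simp_all add: tauE_def mode_of_def)
  have Xc: "\<And>v. v \<in> U c \<Longrightarrow> continuous_on (M c) (X c v)" for c using X_cont by blast
  have Gab: "(a, b) \<in> trans_graph D R" and Gba: "(b, a) \<in> trans_graph D R" using G by auto
  obtain ya where ya: "ya \<in> jump_set_mode D R a"
    using Gab unfolding trans_graph_def jump_set_mode_def jump_set_def by blast
  obtain yx yu where yaeq: "ya = (a, yx, yu)"
    using ya unfolding jump_set_mode_def mode_of_def by (cases ya) auto
  have yaD: "ya \<in> D" using ya unfolding jump_set_mode_def jump_set_def by auto
  have yxM: "yx \<in> M a" using D_sub yaD yaeq by blast
  have AB: "\<exists>T x u T' z w. mode_traj X D a 0 T x u \<and> x 0 = rx \<and> u 0 = ru \<and>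
       mode_traj X D b T T' z w \<and> z T' = q \<and> (b, z T, w T) \<in> R (a, x T, u T)"
    if rD: "(a, rx, ru) \<in> D" and qM: "q \<in> M b" for rx ru q
  proof -
    have rxM: "rx \<in> M a" using D_sub rD by blast
    obtain T x0 u0 where m0: "mode_traj X D a 0 T x0 u0" and x00: "x0 0 = rx" and x0T: "x0 T = yx"
      using ctrl_a rxM yxM unfolding mode_controllable_def by blast
    have T: "T > 0" using m0 unfolding mode_traj_def by simp
    have m1: "mode_traj X D a 0 T x0 (u0(0 := ru))"
      by (rule mode_traj_fix_start[OF m0]) (simp add: x00 rD)
    have eD: "(a, x0 T, u0 T) \<in> D" using m0 T unfolding mode_traj_def by auto
    have "x0 T \<in> tauE ` jump_set_mode D R a" using ya yaeq x0T td by (metis image_eqI)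
    then have eB: "(a, x0 T, u0 T) \<in> jump_set_mode D R a" using standing eD by blast
    then have "q \<in> (\<Union>y \<in> R_to R b (a, x0 T, u0 T). reach_L X M U D b (tauE y))" using H1 qM by blast
    then obtain y where yR: "y \<in> R_to R b (a, x0 T, u0 T)" and qL: "q \<in> reach_L X M U D b (tauE y)"
      by blast
    obtain y1 y2 where yeq: "y = (b, y1, y2)" using yR unfolding R_to_def mode_of_def by (cases y) auto
    have yR': "(b, y1, y2) \<in> R (a, x0 T, u0 T)" using yR yeq unfolding R_to_def by auto
    have yD: "(b, y1, y2) \<in> D" using R_ran yR' by blast
    obtain T' z w where g: "goodtraj X D b 0 T' z w" and z0': "z 0 = tauE y" and zT: "z T' = q"
      using reach_good[of U b M X, OF Xc qL] by blast
    have z0: "z 0 = y1" using z0' yeq td by simp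
    have g1: "goodtraj X D b 0 T' z (w(0 := y2))"
      by (rule good_fix_start[OF g]) (simp add: z0 yD)
    have g2: "goodtraj X D b T (T' + T) (\<lambda>t. z (t - T)) (\<lambda>t. (w(0 := y2)) (t - T))"
      using good_shift[OF g1, of T] by simp
    have m2: "mode_traj X D b T (T' + T) (\<lambda>t. z (t - T)) (\<lambda>t. (w(0 := y2)) (t - T))"
      by (rule good_mode_traj[OF g2])
    show ?thesis
      apply (rule exI[of _ T], rule exI[of _ x0], rule exI[of _ "u0(0 := ru)"],
             rule exI[of _ "T' + T"], rule exI[of _ "\<lambda>t. z (t - T)"],
             rule exI[of _ "\<lambda>t. (w(0 := y2)) (t - T)"])
      using m1 m2 x00 zT z0 yR' T by auto
  qed
  show ?thesis unfolding globally_controllable_def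
  proof (intro allI impI)
    fix c p d q assume pM: "p \<in> M c" and qM: "q \<in> M d"
    have cab: "c = a \<or> c = b" and dab: "d = a \<or> d = b" using modes by auto
    show "hybrid_traj_joins X D R (c, p) (d, q)"
    proof (cases "c = a")
      case ca: True
      obtain T0 x0 u0 where m0: "mode_traj X D a 0 T0 x0 u0" and x00: "x0 0 = p"
        using ctrl_a pM ca unfolding mode_controllable_def by blast
      have pD: "(a, p, u0 0) \<in> D" using m0 x00 unfolding mode_traj_def by auto
      show ?thesis
      proof (cases "d = a")
        case True
        obtain T x u where m: "mode_traj X D a 0 T x u" and "x 0 = p" "x T = q"
          using ctrl_a pM qM ca True unfolding mode_controllable_def by blast
        then show ?thesis using hyb1[OF m, of R] ca True by simp
      next
        case False
        then have db: "d = b" using dab by simp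
        obtain T x u T' z w where m1: "mode_traj X D a 0 T x u" and "x 0 = p"
          and m2: "mode_traj X D b T T' z w" and "z T' = q" and J: "(b, z T, w T) \<in> R (a, x T, u T)"
          using AB[OF pD] qM db by blast
        then show ?thesis using hyb2[OF m1 m2 Gab J] ca db by simp
      qed
    next
      case False
      then have cb: "c = b" using cab by simp
      have "p \<in> (\<Union>y \<in> R_to R b ya. reach_L X M U D b (tauE y))" using H1 ya pM cb by blast
      then obtain y' where "y' \<in> R_to R b ya" "p \<in> reach_L X M U D b (tauE y')" by blast
      then obtain T y u where g: "goodtraj X D b 0 T y u" and "y T = p"
        using reach_good[of U b M X, OF Xc] by blast
      then have pD: "(b, p, u T) \<in> D" unfolding goodtraj_def by auto
      have "reach_L X M U D b (tauE (b, p, u T)) \<inter> tauE ` jump_set_mode D R b \<noteq> {}"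
        using bspec[OF H2 pD] by (simp add: td)
      then obtain z where zL: "z \<in> reach_L X M U D b p" and zB: "z \<in> tauE ` jump_set_mode D R b"
        unfolding td(1) by blast
      obtain T1 y u where g: "goodtraj X D b 0 T1 y u" and y0: "y 0 = p" and yT: "y T1 = z"
        using reach_good[of U b M X, OF Xc zL] by blast
      have m1: "mode_traj X D b 0 T1 y u" by (rule good_mode_traj[OF g])
      have T1: "T1 > 0" using g unfolding goodtraj_def by simp
      have eD: "(b, z, u T1) \<in> D" using g yT T1 unfolding goodtraj_def by auto
      then have "(b, z, u T1) \<in> jump_set_mode D R b" using standing zB by blast
      then obtain r where rR: "r \<in> R (b, z, u T1)" unfolding jump_set_mode_def jump_set_def by blast
      have rD: "r \<in> D" using R_ran rR by blast
      have "(b, mode_of r) \<in> trans_graph D R"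
        unfolding trans_graph_def
        by (rule CollectI, simp only: case_prod_conv, rule exI[of _ "(b, z, u T1)"], rule exI[of _ r]) (simp add: eD rD rR td)
      then have "mode_of r = a" using G ab by auto
      then obtain rx ru where req: "r = (a, rx, ru)" unfolding mode_of_def by (cases r) auto
      have raD: "(a, rx, ru) \<in> D" using rD req by simp
      have rxM: "rx \<in> M a" using D_sub raD by blast
      have J1: "(a, rx, ru) \<in> R (b, y T1, u T1)" using rR req yT by simp
      show ?thesis
      proof (cases "d = a")
        case da: True
        obtain T2 x2 u2 where m0: "mode_traj X D a 0 T2 x2 u2" and x20: "x2 0 = rx" and x2T: "x2 T2 = q"
          using ctrl_a rxM qM da unfolding mode_controllable_def by blast
        have m0': "mode_traj X D a 0 T2 x2 (u2(0 := ru))"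
          by (rule mode_traj_fix_start[OF m0]) (simp add: x20 raD)
        have m2: "mode_traj X D a T1 (T2 + T1) (\<lambda>t. x2 (t - T1)) (\<lambda>t. (u2(0 := ru)) (t - T1))"
          using mode_traj_shift[OF m0', of T1] by simp
        have J: "(a, (\<lambda>t. x2 (t - T1)) T1, (\<lambda>t. (u2(0 := ru)) (t - T1)) T1) \<in> R (b, y T1, u T1)"
          using J1 x20 by simp
        show ?thesis using hyb2[OF m1 m2 Gba J] cb da y0 x2T by simp
      next
        case False
        then have db: "d = b" using dab by simp
        have qMb: "q \<in> M b" using qM db by simp
        from AB[OF raD qMb] obtain Ta xa ua Tb zb wb where HH: "mode_traj X D a 0 Ta xa ua \<and> xa 0 = rx \<and> ua 0 = ru \<and>
          mode_traj X D b Ta Tb zb wb \<and> zb Tb = q \<and> (b, zb Ta, wb Ta) \<in> R (a, xa Ta, ua Ta)"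
          by (elim exE) (rule that)
        have m2: "mode_traj X D a 0 Ta xa ua" and x0: "xa 0 = rx" and u0: "ua 0 = ru"
          and m3: "mode_traj X D b Ta Tb zb wb" and zT: "zb Tb = q" and J: "(b, zb Ta, wb Ta) \<in> R (a, xa Ta, ua Ta)"
          using HH by simp_all
        have m2': "mode_traj X D a T1 (Ta + T1) (\<lambda>t. xa (t - T1)) (\<lambda>t. ua (t - T1))"
          using mode_traj_shift[OF m2, of T1] by simp
        have m3': "mode_traj X D b (Ta + T1) (Tb + T1) (\<lambda>t. zb (t - T1)) (\<lambda>t. wb (t - T1))"
          using mode_traj_shift[OF m3, of T1] by simp
        have J1': "(a, (\<lambda>t. xa (t - T1)) T1, (\<lambda>t. ua (t - T1)) T1) \<in> R (b, y T1, u T1)"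
          using J1 x0 u0 by simp
        have J2': "(b, (\<lambda>t. zb (t - T1)) (Ta + T1), (\<lambda>t. wb (t - T1)) (Ta + T1))
            \<in> R (a, (\<lambda>t. xa (t - T1)) (Ta + T1), (\<lambda>t. ua (t - T1)) (Ta + T1))"
          using J by simp
        show ?thesis using hyb3[OF m1 m2' m3' Gba Gab J1' J2'] cb db y0 zT by simp
      qed
    qed
  qed
qed

end
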